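(* For metric formulas $\psi,\varphi$, over strict timed traces, and for $n>0$: $\psi\,\mathsf{U}_{[n,n]}\,\varphi\equiv\psi\wedge\bigvee_{i=1}^n\bigcirc_{[i,i]}(\psi\,\mathsf{U}_{[n-i,n-i]}\,\varphi)$; $\psi\,\mathsf{R}_{[n,n]}\,\varphi\equiv\psi\vee\bigwedge_{i=1}^n\widehat{\bigcirc}_{[i,i]}(\psi\,\mathsf{R}_{[n-i,n-i]}\,\varphi)$; $\Diamond_{[n,n]}\varphi\equiv\bigvee_{i=1}^n\bigcirc_{[i,i]}\Diamond_{[n-i,n-i]}\varphi$; $\Box_{[n,n]}\varphi\equiv\bigwedge_{i=1}^n\widehat{\bigcirc}_{[i,i]}\Box_{[n-i,n-i]}\varphi$; and the same holds for the dual past operators (replacing $\mathsf{U},\mathsf{R},\bigcirc,\widehat{\bigcirc},\Diamond,\Box$ by $\mathsf{S},\mathsf{T},\bullet,\widehat{\bullet}$, eventually before ($\top\,\mathsf{S}\,\cdot$), $\blacksquare$, respectively).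
   Context: Metric formulas over $\mathcal{A}$: $\varphi ::= p \mid \bot \mid \varphi_1\otimes\varphi_2 \mid \bullet_I\varphi \mid \varphi_1\,\mathsf{S}_I\,\varphi_2 \mid \varphi_1\,\mathsf{T}_I\,\varphi_2 \mid \bigcirc_I\varphi \mid \varphi_1\,\mathsf{U}_I\,\varphi_2 \mid \varphi_1\,\mathsf{R}_I\,\varphi_2$, $\otimes\in\{\to,\wedge,\vee\}$, $I=[m,n)$; $[m,n]$ abbreviates $[m,n+1)$. Derived: $\neg\varphi=\varphi\to\bot$, $\top=\neg\bot$, $\blacksquare_I\varphi=\bot\,\mathsf{T}_I\,\varphi$, eventually before $=\top\,\mathsf{S}_I\,\varphi$, $\widehat{\bullet}_I\varphi=\bullet_I\varphi\vee\neg\bullet_I\top$, $\Box_I\varphi=\bot\,\mathsf{R}_I\,\varphi$, $\Diamond_I\varphi=\top\,\mathsf{U}_I\,\varphi$, $\widehat{\bigcirc}_I\varphi=\bigcirc_I\varphi\vee\neg\bigcirc_I\top$. Timed HT-trace $\mathbf{M}=(\langle\mathbf{H},\mathbf{T}\rangle,\tau)$ of length $\lambda$: $H_i\subseteq T_i\subseteq\mathcal{A}$, $\tau:[0,\lambda)\to\mathbb{N}$, $\tau(0)=0$; strict means $\tau(i)<\tau(i+1)$ whenever $i+1<\lambda$. Satisfaction at $k$: $\bot$ never; $p$ iff $p\in H_k$; $\wedge,\vee$ usual; $\varphi\to\psi$ iff for both $\mathbf{M}'=\mathbf{M}$ and $\mathbf{M}'=(\langle\mathbf{T},\mathbf{T}\rangle,\tau)$,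 $\mathbf{M}',k\not\models\varphi$ or $\mathbf{M}',k\models\psi$; $\bullet_I\varphi$: $k>0$, $\varphi$ at $k-1$, $\tau(k)-\tau(k-1)\in I$; $\varphi\,\mathsf{S}_I\,\psi$: some $j\in[0,k]$ with $\tau(k)-\tau(j)\in I$, $\psi$ at $j$, $\varphi$ at all $i\in(j,k]$; $\varphi\,\mathsf{T}_I\,\psi$: for all such $j$, $\psi$ at $j$ or $\varphi$ at some $i\in(j,k]$; $\bigcirc_I\varphi$: $k+1<\lambda$, $\varphi$ at $k+1$, $\tau(k+1)-\tau(k)\in I$; $\varphi\,\mathsf{U}_I\,\psi$: some $j\in[k,\lambda)$ with $\tau(j)-\tau(k)\in I$, $\psi$ at $j$, $\varphi$ at all $i\in[k,j)$; $\varphi\,\mathsf{R}_I\,\psi$: for all such $j$, $\psi$ at $j$ or $\varphi$ at some $i\in[k,j)$. $\varphi\equiv\psi$ means $\mathbf{M},k\models\varphi\leftrightarrow\psi$ for all (here: strict) timed HT-traces $\mathbf{M}$ and all $k$. *)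

theory Defs
  imports Main "HOL-Library.Extended_Nat"
begin

type_synonym interval = "nat \<times> enat"

definition in_int :: "nat \<Rightarrow> interval \<Rightarrow> bool" where
  "in_int d I \<longleftrightarrow> fst I \<le> d \<and> enat d < snd I"

text \<open>[m,n] abbreviates [m,n+1).\<close>
definition pt :: "nat \<Rightarrow> interval" where
  "pt n = (n, enat (Suc n))"

datatype 'a mform =
    Atom 'a
  | Bot
  | Impl "'a mform" "'a mform"
  | Conj "'a mform" "'a mform"
  | Disj "'a mform" "'a mform"
  | Prev interval "'a mform"
  | Since interval "'a mform" "'a mform"
  | Trigger interval "'a mform" "'a mform"
  | Next interval "'a mform"
  | Until interval "'a mform" "'a mform"
  | Release interval "'a mform" "'a mform"

definition Neg :: "'a mform \<Rightarrow> 'a mform" where "Neg \<phi> = Impl \<phi> Bot"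
definition Top :: "'a mform" where "Top = Neg Bot"
definition Iff :: "'a mform \<Rightarrow> 'a mform \<Rightarrow> 'a mform" where
  "Iff \<phi> \<psi> = Conj (Impl \<phi> \<psi>) (Impl \<psi> \<phi>)"
definition Always_before :: "interval \<Rightarrow> 'a mform \<Rightarrow> 'a mform" where
  "Always_before I \<phi> = Trigger I Bot \<phi>"
definition Eventually_before :: "interval \<Rightarrow> 'a mform \<Rightarrow> 'a mform" where
  "Eventually_before I \<phi> = Since I Top \<phi>"
definition Weak_prev :: "interval \<Rightarrow> 'a mform \<Rightarrow> 'a mform" where
  "Weak_prev I \<phi> = Disj (Prev I \<phi>) (Neg (Prev I Top))"
definition Always :: "interval \<Rightarrow> 'a mform \<Rightarrow> 'a mform" where
  "Always I \<phi> = Release I Bot \<phi>"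
definition Eventually :: "interval \<Rightarrow> 'a mform \<Rightarrow> 'a mform" where
  "Eventually I \<phi> = Until I Top \<phi>"
definition Weak_next :: "interval \<Rightarrow> 'a mform \<Rightarrow> 'a mform" where
  "Weak_next I \<phi> = Disj (Next I \<phi>) (Neg (Next I Top))"

fun BigOr :: "'a mform list \<Rightarrow> 'a mform" where
  "BigOr [] = Bot"
| "BigOr [\<phi>] = \<phi>"
| "BigOr (\<phi> # \<psi>s) = Disj \<phi> (BigOr \<psi>s)"

fun BigAnd :: "'a mform list \<Rightarrow> 'a mform" where
  "BigAnd [] = Top"
| "BigAnd [\<phi>] = \<phi>"
| "BigAnd (\<phi> # \<psi>s) = Conj \<phi> (BigAnd \<psi>s)"

primrec sat :: "(nat \<Rightarrow> 'a set) \<Rightarrow> (nat \<Rightarrow> 'a set) \<Rightarrow> (nat \<Rightarrow> nat) \<Rightarrow> enat \<Rightarrow> nat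
                 \<Rightarrow> 'a mform \<Rightarrow> bool" where
  "sat H T \<tau> lam k (Atom p) = (p \<in> H k)"
| "sat H T \<tau> lam k Bot = False"
| "sat H T \<tau> lam k (Impl \<phi> \<psi>) =
     ((\<not> sat H T \<tau> lam k \<phi> \<or> sat H T \<tau> lam k \<psi>) \<and>
      (\<not> sat T T \<tau> lam k \<phi> \<or> sat T T \<tau> lam k \<psi>))"
| "sat H T \<tau> lam k (Conj \<phi> \<psi>) = (sat H T \<tau> lam k \<phi> \<and> sat H T \<tau> lam k \<psi>)"
| "sat H T \<tau> lam k (Disj \<phi> \<psi>) = (sat H T \<tau> lam k \<phi> \<or> sat H T \<tau> lam k \<psi>)"
| "sat H T \<tau> lam k (Prev I \<phi>) =
     (0 < k \<and> sat H T \<tau> lam (k - 1) \<phi> \<and> in_int (\<tau> k - \<tau> (k - 1)) I)"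
| "sat H T \<tau> lam k (Since I \<phi> \<psi>) =
     (\<exists>j\<le>k. in_int (\<tau> k - \<tau> j) I \<and> sat H T \<tau> lam j \<psi> \<and>
        (\<forall>i. j < i \<and> i \<le> k \<longrightarrow> sat H T \<tau> lam i \<phi>))"
| "sat H T \<tau> lam k (Trigger I \<phi> \<psi>) =
     (\<forall>j\<le>k. in_int (\<tau> k - \<tau> j) I \<longrightarrow> sat H T \<tau> lam j \<psi> \<or>
        (\<exists>i. j < i \<and> i \<le> k \<and> sat H T \<tau> lam i \<phi>))"
| "sat H T \<tau> lam k (Next I \<phi>) =
     (enat (Suc k) < lam \<and> sat H T \<tau> lam (Suc k) \<phi> \<and> in_int (\<tau> (Suc k) - \<tau> k) I)"
| "sat H T \<tau> lam k (Until I \<phi> \<psi>) =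
     (\<exists>j. k \<le> j \<and> enat j < lam \<and> in_int (\<tau> j - \<tau> k) I \<and> sat H T \<tau> lam j \<psi> \<and>
        (\<forall>i. k \<le> i \<and> i < j \<longrightarrow> sat H T \<tau> lam i \<phi>))"
| "sat H T \<tau> lam k (Release I \<phi> \<psi>) =
     (\<forall>j. k \<le> j \<and> enat j < lam \<and> in_int (\<tau> j - \<tau> k) I \<longrightarrow> sat H T \<tau> lam j \<psi> \<or>
        (\<exists>i. k \<le> i \<and> i < j \<and> sat H T \<tau> lam i \<phi>))"

definition strict_timed_ht_trace ::
  "(nat \<Rightarrow> 'a set) \<Rightarrow> (nat \<Rightarrow> 'a set) \<Rightarrow> (nat \<Rightarrow> nat) \<Rightarrow> enat \<Rightarrow> bool" where
  "strict_timed_ht_trace H T \<tau> lam \<longleftrightarrow>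
     (\<forall>i. enat i < lam \<longrightarrow> H i \<subseteq> T i) \<and> \<tau> 0 = 0 \<and>
     (\<forall>i. enat (Suc i) < lam \<longrightarrow> \<tau> i < \<tau> (Suc i))"

definition mequiv :: "'a mform \<Rightarrow> 'a mform \<Rightarrow> bool" (infix "\<equiv>\<^sub>M" 50) where
  "\<phi> \<equiv>\<^sub>M \<psi> \<longleftrightarrow> (\<forall>H T \<tau> lam k. strict_timed_ht_trace H T \<tau> lam \<and> enat k < lam \<longrightarrow>
                     sat H T \<tau> lam k (Iff \<phi> \<psi>))"

end

theory Submission imports Defs begin

definition strictt :: "(nat \<Rightarrow> nat) \<Rightarrow> enat \<Rightarrow> bool" where
  "strictt \<tau> lam \<longleftrightarrow> (\<forall>i. enat (Suc i) < lam \<longrightarrow> \<tau> i < \<tau> (Suc i))"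

lemma mono_tau:
  assumes "strictt \<tau> lam" "i \<le> j" "enat j < lam"
  shows "\<tau> i \<le> \<tau> j"
  using assms(2,3)
proof (induction j)
  case 0 then show ?case by simp
next
  case (Suc j)
  show ?case
  proof (cases "i = Suc j")
    case False
    then have "i \<le> j" using Suc by simp
    moreover have "enat j < lam" by (rule le_less_trans[OF _ Suc.prems(2)]) simp
    ultimately have "\<tau> i \<le> \<tau> j" using Suc.IH by simp
    moreover have "\<tau> j < \<tau> (Suc j)" using assms(1) Suc.prems(2) unfolding strictt_def by blast
    ultimately show ?thesis by simp
  qed simp
qed

lemma in_pt[simp]: "in_int d (pt m) \<longleftrightarrow> d = m"
  by (auto simp: in_int_def pt_def)

lemma sat_Top[simp]: "sat X Y \<tau> lam k Top"
  by (simp add: Top_def Neg_def)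

lemma sat_BigOr: "xs \<noteq> [] \<Longrightarrow> sat X Y \<tau> lam k (BigOr xs) = (\<exists>x\<in>set xs. sat X Y \<tau> lam k x)"
  by (induction xs rule: BigOr.induct) auto

lemma sat_BigAnd: "xs \<noteq> [] \<Longrightarrow> sat X Y \<tau> lam k (BigAnd xs) = (\<forall>x\<in>set xs. sat X Y \<tau> lam k x)"
  by (induction xs rule: BigAnd.induct) auto

lemma sat_Weak_next[simp]: "sat X Y \<tau> lam k (Weak_next I \<phi>) =
   (enat (Suc k) < lam \<and> in_int (\<tau> (Suc k) - \<tau> k) I \<longrightarrow> sat X Y \<tau> lam (Suc k) \<phi>)"
  by (auto simp: Weak_next_def Neg_def)

lemma sat_Weak_prev[simp]: "sat X Y \<tau> lam k (Weak_prev I \<phi>) =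
   (0 < k \<and> in_int (\<tau> k - \<tau> (k - 1)) I \<longrightarrow> sat X Y \<tau> lam (k - 1) \<phi>)"
  by (auto simp: Weak_prev_def Neg_def)

lemma mequiv_intro:
  assumes "\<And>X Y \<tau> lam k. strictt \<tau> lam \<Longrightarrow> enat k < lam \<Longrightarrow> sat X Y \<tau> lam k a = sat X Y \<tau> lam k b"
  shows "a \<equiv>\<^sub>M b"
  unfolding mequiv_def Iff_def strict_timed_ht_trace_def
  using assms[unfolded strictt_def] by (auto simp del: sat.simps simp: sat.simps(3,4))

lemma ex_range: "(\<exists>x\<in>set (map f [1..<Suc n]). P x) = (\<exists>i. 1 \<le> i \<and> i \<le> n \<and> P (f i))"
  by auto
lemma all_range: "(\<forall>x\<in>set (map f [1..<Suc n]). P x) = (\<forall>i. 1 \<le> i \<and> i \<le> n \<longrightarrow> P (f i))"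
  by auto

lemma enat_lt_mono: "enat j < lam \<Longrightarrow> i \<le> j \<Longrightarrow> enat i < lam"
  by (meson enat_ord_simps(1) le_less_trans)

lemma strict_lt: "strictt \<tau> lam \<Longrightarrow> enat (Suc k) < lam \<Longrightarrow> \<tau> k < \<tau> (Suc k)"
  unfolding strictt_def by blast

lemma until_case:
  assumes st: "strictt \<tau> lam" and n: "0 < n"
  shows "sat X Y \<tau> lam k (Until (pt n) \<psi> \<phi>) =
    (sat X Y \<tau> lam k \<psi> \<and> (\<exists>i. 1 \<le> i \<and> i \<le> n \<and> sat X Y \<tau> lam k (Next (pt i) (Until (pt (n - i)) \<psi> \<phi>))))"
proof
  assume "sat X Y \<tau> lam k (Until (pt n) \<psi> \<phi>)"
  then obtain j where j: "k \<le> j" "enat j < lam" "\<tau> j - \<tau> k = n" "sat X Y \<tau> lam j \<phi>"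
    "\<forall>i. k \<le> i \<and> i < j \<longrightarrow> sat X Y \<tau> lam i \<psi>" by auto
  have "j \<noteq> k" using j n by auto
  then have kj: "Suc k \<le> j" using j by simp
  have sk: "enat (Suc k) < lam" using enat_lt_mono[OF j(2) kj] .
  have a: "\<tau> k < \<tau> (Suc k)" using strict_lt[OF st sk] .
  have b: "\<tau> (Suc k) \<le> \<tau> j" using mono_tau[OF st kj j(2)] .
  define i where "i = \<tau> (Suc k) - \<tau> k"
  have "1 \<le> i" "i \<le> n" "\<tau> j - \<tau> (Suc k) = n - i" using a b j(3) unfolding i_def by auto
  moreover have "sat X Y \<tau> lam k \<psi>" using j(5) kj by auto
  ultimately show "sat X Y \<tau> lam k \<psi> \<and> (\<exists>i. 1 \<le> i \<and> i \<le> n \<and> sat X Y \<tau> lam k (Next (pt i) (Until (pt (n - i)) \<psi> \<phi>)))"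
    using sk j kj unfolding i_def by (auto intro!: exI[of _ j])
next
  assume "sat X Y \<tau> lam k \<psi> \<and> (\<exists>i. 1 \<le> i \<and> i \<le> n \<and> sat X Y \<tau> lam k (Next (pt i) (Until (pt (n - i)) \<psi> \<phi>)))"
  then obtain i j where h: "sat X Y \<tau> lam k \<psi>" "1 \<le> i" "i \<le> n" "enat (Suc k) < lam"
    "\<tau> (Suc k) - \<tau> k = i" "Suc k \<le> j" "enat j < lam" "\<tau> j - \<tau> (Suc k) = n - i"
    "sat X Y \<tau> lam j \<phi>" "\<forall>i'. Suc k \<le> i' \<and> i' < j \<longrightarrow> sat X Y \<tau> lam i' \<psi>" by auto
  have b: "\<tau> (Suc k) \<le> \<tau> j" using mono_tau[OF st h(6,7)] .
  have "\<tau> j - \<tau> k = n" using h b by auto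
  moreover have "\<forall>i'. k \<le> i' \<and> i' < j \<longrightarrow> sat X Y \<tau> lam i' \<psi>"
    using h(1,10) by (metis Suc_leI le_neq_implies_less)
  ultimately show "sat X Y \<tau> lam k (Until (pt n) \<psi> \<phi>)" using h by (auto intro!: exI[of _ j])
qed

lemma release_case:
  assumes st: "strictt \<tau> lam" and n: "0 < n"
  shows "sat X Y \<tau> lam k (Release (pt n) \<psi> \<phi>) =
    (sat X Y \<tau> lam k \<psi> \<or> (\<forall>i. 1 \<le> i \<and> i \<le> n \<longrightarrow> sat X Y \<tau> lam k (Weak_next (pt i) (Release (pt (n - i)) \<psi> \<phi>))))"
proof
  assume R: "sat X Y \<tau> lam k (Release (pt n) \<psi> \<phi>)"
  show "sat X Y \<tau> lam k \<psi> \<or> (\<forall>i. 1 \<le> i \<and> i \<le> n \<longrightarrow> sat X Y \<tau> lam k (Weak_next (pt i) (Release (pt (n - i)) \<psi> \<phi>)))"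
  proof (cases "sat X Y \<tau> lam k \<psi>")
    case False
    have "sat X Y \<tau> lam k (Weak_next (pt i) (Release (pt (n - i)) \<psi> \<phi>))" if i: "1 \<le> i" "i \<le> n" for i
    proof -
      have "sat X Y \<tau> lam (Suc k) (Release (pt (n - i)) \<psi> \<phi>)"
        if sk: "enat (Suc k) < lam" and d: "\<tau> (Suc k) - \<tau> k = i"
        unfolding sat.simps in_pt
      proof (intro allI impI)
        fix j assume j: "Suc k \<le> j \<and> enat j < lam \<and> \<tau> j - \<tau> (Suc k) = n - i"
        have b: "\<tau> (Suc k) \<le> \<tau> j" using mono_tau[OF st] j by blast
        have "\<tau> j - \<tau> k = n" using b d j i by auto
        then have "sat X Y \<tau> lam j \<phi> \<or> (\<exists>i'. k \<le> i' \<and> i' < j \<and> sat X Y \<tau> lam i' \<psi>)"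
          using R j by auto
        then show "sat X Y \<tau> lam j \<phi> \<or> (\<exists>i'. Suc k \<le> i' \<and> i' < j \<and> sat X Y \<tau> lam i' \<psi>)"
          using False by (metis Suc_leI le_neq_implies_less)
      qed
      then show ?thesis by simp
    qed
    then show ?thesis by blast
  qed simp
next
  assume H: "sat X Y \<tau> lam k \<psi> \<or> (\<forall>i. 1 \<le> i \<and> i \<le> n \<longrightarrow> sat X Y \<tau> lam k (Weak_next (pt i) (Release (pt (n - i)) \<psi> \<phi>)))"
  show "sat X Y \<tau> lam k (Release (pt n) \<psi> \<phi>)"
    unfolding sat.simps(11) in_pt
  proof (intro allI impI)
    fix j assume j0: "k \<le> j \<and> enat j < lam \<and> \<tau> j - \<tau> k = n"
    then have j: "k \<le> j" "enat j < lam" "\<tau> j - \<tau> k = n" by auto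
    have "j \<noteq> k" using j n by auto
    then have kj: "Suc k \<le> j" using j by simp
    show "sat X Y \<tau> lam j \<phi> \<or> (\<exists>i. k \<le> i \<and> i < j \<and> sat X Y \<tau> lam i \<psi>)"
    proof (cases "sat X Y \<tau> lam k \<psi>")
      case True
      then show ?thesis using kj by auto
    next
      case False
      have sk: "enat (Suc k) < lam" using enat_lt_mono[OF j(2) kj] .
      have a: "\<tau> k < \<tau> (Suc k)" using strict_lt[OF st sk] .
      have b: "\<tau> (Suc k) \<le> \<tau> j" using mono_tau[OF st kj j(2)] .
      define i where "i = \<tau> (Suc k) - \<tau> k"
      have i: "1 \<le> i" "i \<le> n" "\<tau> j - \<tau> (Suc k) = n - i" using a b j(3) unfolding i_def by auto
      have "sat X Y \<tau> lam k (Weak_next (pt i) (Release (pt (n - i)) \<psi> \<phi>))" using H False i by blast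
      then have "sat X Y \<tau> lam j \<phi> \<or> (\<exists>i'. Suc k \<le> i' \<and> i' < j \<and> sat X Y \<tau> lam i' \<psi>)"
        using sk i j kj unfolding i_def by auto
      then show ?thesis by (meson Suc_leD)
    qed
  qed
qed

lemma since_case:
  assumes st: "strictt \<tau> lam" and n: "0 < n" and kl: "enat k < lam"
  shows "sat X Y \<tau> lam k (Since (pt n) \<psi> \<phi>) =
    (sat X Y \<tau> lam k \<psi> \<and> (\<exists>i. 1 \<le> i \<and> i \<le> n \<and> sat X Y \<tau> lam k (Prev (pt i) (Since (pt (n - i)) \<psi> \<phi>))))"
proof
  assume "sat X Y \<tau> lam k (Since (pt n) \<psi> \<phi>)"
  then obtain j where j: "j \<le> k" "\<tau> k - \<tau> j = n" "sat X Y \<tau> lam j \<phi>"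
    "\<forall>i. j < i \<and> i \<le> k \<longrightarrow> sat X Y \<tau> lam i \<psi>" by auto
  have "j \<noteq> k" using j n by auto
  then obtain m where m: "k = Suc m" "j \<le> m" using j by (metis le_SucE lessE nat_less_le)
  have sk: "enat (Suc m) < lam" using kl m by simp
  have ml: "enat m < lam" using enat_lt_mono[OF sk] by simp
  have a: "\<tau> m < \<tau> (Suc m)" using strict_lt[OF st sk] .
  have b: "\<tau> j \<le> \<tau> m" using mono_tau[OF st m(2) ml] .
  define i where "i = \<tau> (Suc m) - \<tau> m"
  have "1 \<le> i" "i \<le> n" "\<tau> m - \<tau> j = n - i" using a b j(2) m(1) unfolding i_def by auto
  moreover have "sat X Y \<tau> lam k \<psi>" using j(4) m by auto
  moreover have "\<forall>i. j < i \<and> i \<le> m \<longrightarrow> sat X Y \<tau> lam i \<psi>" using j(4) m by auto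
  ultimately show "sat X Y \<tau> lam k \<psi> \<and> (\<exists>i. 1 \<le> i \<and> i \<le> n \<and> sat X Y \<tau> lam k (Prev (pt i) (Since (pt (n - i)) \<psi> \<phi>)))"
    using j m unfolding i_def by (auto intro!: exI[of _ j])
next
  assume "sat X Y \<tau> lam k \<psi> \<and> (\<exists>i. 1 \<le> i \<and> i \<le> n \<and> sat X Y \<tau> lam k (Prev (pt i) (Since (pt (n - i)) \<psi> \<phi>)))"
  then have psk: "sat X Y \<tau> lam k \<psi>" and
    "\<exists>i. 1 \<le> i \<and> i \<le> n \<and> sat X Y \<tau> lam k (Prev (pt i) (Since (pt (n - i)) \<psi> \<phi>))" by blast+
  then obtain i where i1: "1 \<le> i" "i \<le> n" and P: "sat X Y \<tau> lam k (Prev (pt i) (Since (pt (n - i)) \<psi> \<phi>))"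
    by blast
  have k0: "0 < k" and d: "\<tau> k - \<tau> (k - 1) = i" and S: "sat X Y \<tau> lam (k - 1) (Since (pt (n - i)) \<psi> \<phi>)"
    using P by (simp_all only: sat.simps(6) in_pt)
  obtain m where km: "k = Suc m" using k0 gr0_implies_Suc by blast
  have mk: "k - 1 = m" using km by simp
  obtain j where hj: "j \<le> m" "\<tau> m - \<tau> j = n - i"
    "sat X Y \<tau> lam j \<phi>" "\<forall>i'. j < i' \<and> i' \<le> m \<longrightarrow> sat X Y \<tau> lam i' \<psi>"
    using S unfolding mk sat.simps(7) in_pt by blast
  have h: "sat X Y \<tau> lam k \<psi>" "1 \<le> i" "i \<le> n" "k = Suc m"
    "\<tau> (Suc m) - \<tau> m = i" "j \<le> m" "\<tau> m - \<tau> j = n - i"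
    "sat X Y \<tau> lam j \<phi>" "\<forall>i'. j < i' \<and> i' \<le> m \<longrightarrow> sat X Y \<tau> lam i' \<psi>"
    using psk i1 km d[unfolded mk] hj by (simp_all only: km)
  have ml: "enat m < lam" using enat_lt_mono[OF kl] h(4) by simp
  have b: "\<tau> j \<le> \<tau> m" using mono_tau[OF st h(6) ml] .
  have "\<tau> k - \<tau> j = n" using h b by auto
  moreover have "\<forall>i'. j < i' \<and> i' \<le> k \<longrightarrow> sat X Y \<tau> lam i' \<psi>"
    using h(1,4,9) by (metis le_SucE)
  ultimately show "sat X Y \<tau> lam k (Since (pt n) \<psi> \<phi>)" using h by (auto intro!: exI[of _ j])
qed

lemma trigger_case:
  assumes st: "strictt \<tau> lam" and n: "0 < n" and kl: "enat k < lam"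
  shows "sat X Y \<tau> lam k (Trigger (pt n) \<psi> \<phi>) =
    (sat X Y \<tau> lam k \<psi> \<or> (\<forall>i. 1 \<le> i \<and> i \<le> n \<longrightarrow> sat X Y \<tau> lam k (Weak_prev (pt i) (Trigger (pt (n - i)) \<psi> \<phi>))))"
proof
  assume R: "sat X Y \<tau> lam k (Trigger (pt n) \<psi> \<phi>)"
  show "sat X Y \<tau> lam k \<psi> \<or> (\<forall>i. 1 \<le> i \<and> i \<le> n \<longrightarrow> sat X Y \<tau> lam k (Weak_prev (pt i) (Trigger (pt (n - i)) \<psi> \<phi>)))"
  proof (cases "sat X Y \<tau> lam k \<psi>")
    case False
    have "sat X Y \<tau> lam k (Weak_prev (pt i) (Trigger (pt (n - i)) \<psi> \<phi>))" if i: "1 \<le> i" "i \<le> n" for i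
    proof -
      have "sat X Y \<tau> lam (k - 1) (Trigger (pt (n - i)) \<psi> \<phi>)"
        if sk: "0 < k" and d: "\<tau> k - \<tau> (k - 1) = i"
        unfolding sat.simps in_pt
      proof (intro allI impI)
        fix j assume j1: "j \<le> k - 1" and j2: "\<tau> (k - 1) - \<tau> j = n - i"
        then have j: "j \<le> k - 1 \<and> \<tau> (k - 1) - \<tau> j = n - i" by simp
        have ml: "enat (k - 1) < lam" using enat_lt_mono[OF kl] by simp
        have b: "\<tau> j \<le> \<tau> (k - 1)" using mono_tau[OF st _ ml] j by blast
        have eq: "\<tau> k - \<tau> j = n" using b d j i by (auto, arith)
        have R': "\<forall>j'\<le>k. \<tau> k - \<tau> j' = n \<longrightarrow> sat X Y \<tau> lam j' \<phi> \<or> (\<exists>i'. j' < i' \<and> i' \<le> k \<and> sat X Y \<tau> lam i' \<psi>)"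
          using R by simp
        have jk: "j \<le> k" using j by arith
        have "sat X Y \<tau> lam j \<phi> \<or> (\<exists>i'. j < i' \<and> i' \<le> k \<and> sat X Y \<tau> lam i' \<psi>)"
          using R'[rule_format, OF jk eq] .
        moreover obtain m where km: "k = Suc m" using sk gr0_implies_Suc by blast
        ultimately show "sat X Y \<tau> lam j \<phi> \<or> (\<exists>i'. j < i' \<and> i' \<le> k - 1 \<and> sat X Y \<tau> lam i' \<psi>)"
          using False unfolding km by (auto simp: le_Suc_eq)
      qed
      then show ?thesis by simp
    qed
    then show ?thesis by blast
  qed simp
next
  assume H: "sat X Y \<tau> lam k \<psi> \<or> (\<forall>i. 1 \<le> i \<and> i \<le> n \<longrightarrow> sat X Y \<tau> lam k (Weak_prev (pt i) (Trigger (pt (n - i)) \<psi> \<phi>)))"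
  show "sat X Y \<tau> lam k (Trigger (pt n) \<psi> \<phi>)"
    unfolding sat.simps(8) in_pt
  proof (intro allI impI)
    fix j assume j1: "j \<le> k" and j2: "\<tau> k - \<tau> j = n"
    then have j0: "j \<le> k \<and> \<tau> k - \<tau> j = n" by simp
    then have j: "j \<le> k" "\<tau> k - \<tau> j = n" by auto
    have "j \<noteq> k" using j n by auto
    then obtain m where m: "k = Suc m" "j \<le> m" using j by (metis le_SucE lessE nat_less_le)
    show "sat X Y \<tau> lam j \<phi> \<or> (\<exists>i. j < i \<and> i \<le> k \<and> sat X Y \<tau> lam i \<psi>)"
    proof (cases "sat X Y \<tau> lam k \<psi>")
      case True
      then show ?thesis using m by auto
    next
      case False
      have sk: "enat (Suc m) < lam" using kl m by simp
      have ml: "enat m < lam" using enat_lt_mono[OF sk] by simp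
      have a: "\<tau> m < \<tau> (Suc m)" using strict_lt[OF st sk] .
      have b: "\<tau> j \<le> \<tau> m" using mono_tau[OF st m(2) ml] .
      define i where "i = \<tau> (Suc m) - \<tau> m"
      have i: "1 \<le> i" "i \<le> n" "\<tau> m - \<tau> j = n - i" using a b j(2) m(1) unfolding i_def by auto
      have "sat X Y \<tau> lam k (Weak_prev (pt i) (Trigger (pt (n - i)) \<psi> \<phi>))" using H False i by blast
      moreover have d: "\<tau> k - \<tau> (k - 1) = i" unfolding i_def m(1) by simp
      ultimately have "sat X Y \<tau> lam (k - 1) (Trigger (pt (n - i)) \<psi> \<phi>)"
        using m(1) by simp
      then have "sat X Y \<tau> lam m (Trigger (pt (n - i)) \<psi> \<phi>)" using m(1) by simp
      then have "\<forall>j'\<le>m. \<tau> m - \<tau> j' = n - i \<longrightarrow> sat X Y \<tau> lam j' \<phi> \<or> (\<exists>i'. j' < i' \<and> i' \<le> m \<and> sat X Y \<tau> lam i' \<psi>)"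
        by simp
      then have "sat X Y \<tau> lam j \<phi> \<or> (\<exists>i'. j < i' \<and> i' \<le> m \<and> sat X Y \<tau> lam i' \<psi>)"
        using m(2) i(3) by blast
      then show ?thesis unfolding m(1) using le_SucI by blast
    qed
  qed
qed

theorem lemma2:
  fixes \<psi> \<phi> :: "'a mform" and n :: nat
  assumes "0 < n"
  shows "Until (pt n) \<psi> \<phi> \<equiv>\<^sub>M
           Conj \<psi> (BigOr (map (\<lambda>i. Next (pt i) (Until (pt (n - i)) \<psi> \<phi>)) [1..<Suc n])) \<and>
         Release (pt n) \<psi> \<phi> \<equiv>\<^sub>M
           Disj \<psi> (BigAnd (map (\<lambda>i. Weak_next (pt i) (Release (pt (n - i)) \<psi> \<phi>)) [1..<Suc n])) \<and>
         Eventually (pt n) \<phi> \<equiv>\<^sub>M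
           BigOr (map (\<lambda>i. Next (pt i) (Eventually (pt (n - i)) \<phi>)) [1..<Suc n]) \<and>
         Always (pt n) \<phi> \<equiv>\<^sub>M
           BigAnd (map (\<lambda>i. Weak_next (pt i) (Always (pt (n - i)) \<phi>)) [1..<Suc n]) \<and>
         Since (pt n) \<psi> \<phi> \<equiv>\<^sub>M
           Conj \<psi> (BigOr (map (\<lambda>i. Prev (pt i) (Since (pt (n - i)) \<psi> \<phi>)) [1..<Suc n])) \<and>
         Trigger (pt n) \<psi> \<phi> \<equiv>\<^sub>M
           Disj \<psi> (BigAnd (map (\<lambda>i. Weak_prev (pt i) (Trigger (pt (n - i)) \<psi> \<phi>)) [1..<Suc n])) \<and>
         Eventually_before (pt n) \<phi> \<equiv>\<^sub>M
           BigOr (map (\<lambda>i. Prev (pt i) (Eventually_before (pt (n - i)) \<phi>)) [1..<Suc n]) \<and>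
         Always_before (pt n) \<phi> \<equiv>\<^sub>M
           BigAnd (map (\<lambda>i. Weak_prev (pt i) (Always_before (pt (n - i)) \<phi>)) [1..<Suc n])"
proof -
  have ne: "\<And>f. map f [1..<Suc n] \<noteq> []" using assms by simp
  have T: "\<And>X Y \<tau> lam k. sat X Y \<tau> lam k Top" by simp
  show ?thesis
    apply (intro conjI; rule mequiv_intro)
    subgoal for X Y \<tau> lam k
      by (simp only: until_case[OF _ assms] sat.simps(4) sat_BigOr[OF ne] ex_range)
    subgoal for X Y \<tau> lam k
      by (simp only: release_case[OF _ assms] sat.simps(5) sat_BigAnd[OF ne] all_range)
    subgoal for X Y \<tau> lam k
      by (simp only: Eventually_def until_case[OF _ assms] T simp_thms sat_BigOr[OF ne] ex_range)
    subgoal for X Y \<tau> lam k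
      by (simp only: Always_def release_case[OF _ assms] sat.simps(2) simp_thms sat_BigAnd[OF ne] all_range)
    subgoal for X Y \<tau> lam k
      by (simp only: since_case[OF _ assms] sat.simps(4) sat_BigOr[OF ne] ex_range)
    subgoal for X Y \<tau> lam k
      by (simp only: trigger_case[OF _ assms] sat.simps(5) sat_BigAnd[OF ne] all_range)
    subgoal for X Y \<tau> lam k
      by (simp only: Eventually_before_def since_case[OF _ assms] T simp_thms sat_BigOr[OF ne] ex_range)
    subgoal for X Y \<tau> lam k
      by (simp only: Always_before_def trigger_case[OF _ assms] sat.simps(2) simp_thms sat_BigAnd[OF ne] all_range)
    done
qed

end
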